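(* Let $a\in[0,\infty)$ and let $t:[0,1]\to[0,\infty]$ and $s:[0,\infty]\to[0,1]$ be continuous and increasing functions such that (1) $t(x)=\frac{a}{2}$ if and only if $x=0$, and (2) the function $G_{t,s}:[0,1]^2\to[0,1]$, $G_{t,s}(x,y)=s(t(x)+t(y))$, is a grouping function. Then $s(x)=0$ if and only if $x\in[0,a]$.
   Context: "Increasing" means non-decreasing. Arithmetic in $[0,\infty]$ uses $c+\infty=\infty$; continuity on $[0,\infty]$ refers to the usual topology of the extended half-line. A grouping function is a map $G:[0,1]^2\to[0,1]$ that is (G1) commutative, (G2) $G(x,y)=0$ iff $x=y=0$, (G3) $G(x,y)=1$ iff $x=1$ or $y=1$, (G4) increasing in each variable, (G5) continuous. *)

theory Defs
  imports "HOL-Analysis.Analysis" "HOL-Library.Extended_Nonnegative_Real"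
begin

definition grouping_function :: "(real \<Rightarrow> real \<Rightarrow> real) \<Rightarrow> bool" where
  "grouping_function G \<longleftrightarrow>
     (\<forall>x\<in>{0..1}. \<forall>y\<in>{0..1}. G x y \<in> {0..1}) \<and>
     (\<forall>x\<in>{0..1}. \<forall>y\<in>{0..1}. G x y = G y x) \<and>
     (\<forall>x\<in>{0..1}. \<forall>y\<in>{0..1}. G x y = 0 \<longleftrightarrow> x = 0 \<and> y = 0) \<and>
     (\<forall>x\<in>{0..1}. \<forall>y\<in>{0..1}. G x y = 1 \<longleftrightarrow> x = 1 \<or> y = 1) \<and>
     (\<forall>x\<in>{0..1}. \<forall>x'\<in>{0..1}. \<forall>y\<in>{0..1}. x \<le> x' \<longrightarrow> G x y \<le> G x' y) \<and>
     (\<forall>x\<in>{0..1}. \<forall>y\<in>{0..1}. \<forall>y'\<in>{0..1}. y \<le> y' \<longrightarrow> G x y \<le> G x y') \<and>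
     continuous_on ({0..1} \<times> {0..1}) (\<lambda>(x, y). G x y)"

end

theory Submission
  imports Defs
begin

theorem proposition6p2:
  fixes a :: real and t :: "real \<Rightarrow> ennreal" and s :: "ennreal \<Rightarrow> real"
  assumes a_nonneg: "a \<ge> 0"
    and t_cont: "continuous_on {0..1} t"
    and t_mono: "mono_on {0..1} t"
    and s_range: "\<forall>z. s z \<in> {0..1}"
    and s_cont: "continuous_on UNIV s"
    and s_mono: "mono s"
    and t_zero: "\<forall>x\<in>{0..1}. t x = ennreal (a / 2) \<longleftrightarrow> x = 0"
    and grouping: "grouping_function (\<lambda>x y. s (t x + t y))"
  shows "\<forall>z. s z = 0 \<longleftrightarrow> z \<le> ennreal a"
proof
  fix z
  have G0: "\<And>x y. x \<in> {0..1} \<Longrightarrow> y \<in> {0..1} \<Longrightarrow> s (t x + t y) = 0 \<longleftrightarrow> x = 0 \<and> y = 0"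
  proof -
    have "\<forall>x\<in>{0..1}. \<forall>y\<in>{0..1}. s (t x + t y) = 0 \<longleftrightarrow> x = 0 \<and> y = 0"
      using grouping unfolding grouping_function_def by (elim conjE) simp
    then show "\<And>x y. x \<in> {0..1} \<Longrightarrow> y \<in> {0..1} \<Longrightarrow> s (t x + t y) = 0 \<longleftrightarrow> x = 0 \<and> y = 0" by blast
  qed
  have t0: "t 0 = ennreal (a/2)" using t_zero by auto
  have a2: "ennreal (a/2) + ennreal (a/2) = ennreal a"
    using a_nonneg by (simp add: ennreal_plus[symmetric] del: ennreal_plus)
  have sa: "s (ennreal a) = 0" using G0[of 0 0] t0 a2 by simp
  show "s z = 0 \<longleftrightarrow> z \<le> ennreal a"
  proof
    assume "z \<le> ennreal a"
    then have "s z \<le> s (ennreal a)" using s_mono by (simp add: monoD)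
    then show "s z = 0" using sa s_range by (metis atLeastAtMost_iff order_antisym)
  next
    assume sz: "s z = 0"
    show "z \<le> ennreal a"
    proof (rule ccontr)
      assume "\<not> z \<le> ennreal a"
      then have az: "ennreal a < z" by simp
      have "(t \<longlongrightarrow> t 0) (at 0 within {0..1})"
        using t_cont by (simp add: continuous_on_def)
      then have "((\<lambda>x. t x + t x) \<longlongrightarrow> t 0 + t 0) (at 0 within {0..1})"
        by (intro tendsto_add)
      then have "((\<lambda>x. t x + t x) \<longlongrightarrow> ennreal a) (at 0 within {0..1})"
        using t0 a2 by simp
      then have "eventually (\<lambda>x. t x + t x < z) (at 0 within {0..1})"
        using az by (rule order_tendstoD)
      then obtain d where d: "d > 0" and dP0: "\<forall>x\<in>{0..1}. x \<noteq> 0 \<and> dist x 0 < d \<longrightarrow> t x + t x < z"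
        unfolding eventually_at by (elim exE conjE) (rule that)
      have dP: "\<And>x. x \<in> {0..1} \<Longrightarrow> 0 < x \<Longrightarrow> dist x 0 < d \<Longrightarrow> t x + t x < z"
        using dP0 by force
      define x where "x = min (d/2) 1"
      have x01: "x \<in> {0..1}" and xpos: "x > 0" using d by (auto simp: x_def)
      have "dist x 0 < d" using d xpos by (simp add: x_def dist_real_def)
      then have "t x + t x < z" using dP x01 xpos by simp
      then have "s (t x + t x) \<le> s z" using s_mono by (simp add: monoD)
      then have "s (t x + t x) = 0" using sz s_range by (metis atLeastAtMost_iff order_antisym)
      then show False using G0 x01 xpos by simp
    qed
  qed
qed

end
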